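(* Let $b\in\mathbb R^d\setminus\{0\}$ and $\lambda_1\ge\dots\ge\lambda_d>0$. Define $F(y)=-\sum_{i=1}^d|b_i|\sqrt{y_i}-\sqrt{\sum_{i=1}^d\lambda_i^{-1}y_i}$, $B_i=b_i^2(\|b\|_2+\lambda_d^{-1/2})^{-2}$, $\mathcal I=\{i\in[d]:b_i\neq0\}$, $D_F=\{y\in\mathbb R^d:y_i>B_i\ \forall i\in[d],\ \sum_{i=1}^dy_i<1\}$, $$t_0=9\max\Big(\max_{i\in\mathcal I}(b_i^2B_i)^{-1/2},\ \min_{i\in\mathcal I}(\lambda_i^{-1}B_i)^{-1/2}\Big),$$ and for $t>0$, $F^{(t)}(y)=tF(y)-\sum_{i=1}^d\log(y_i-B_i)-\log\big(1-\sum_{i=1}^dy_i\big)$. Then for all $t\ge t_0$, $F^{(t)}$ is self-concordant on $D_F$.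
   Context: A function $G$ satisfies the self-concordance differential inequality on $D\subset\mathbb R^d$ if for every $z\in D$ and $h\in\mathbb R^d$, $|D^3G(z)[h,h,h]|\le2\,(D^2G(z)[h,h])^{3/2}$, where $D^kG(z)[h,\dots,h]$ is the $k$-th directional derivative. $G$ defined on $D$ is self-concordant if it satisfies this inequality on $D$ and $G(z)\to+\infty$ as $z\to\partial D$. *)

theory Defs
  imports "HOL-Analysis.Analysis"
begin

definition dir_deriv :: "nat \<Rightarrow> ('a::real_normed_vector \<Rightarrow> real) \<Rightarrow> 'a \<Rightarrow> 'a \<Rightarrow> real" where
  "dir_deriv k G z h = (deriv ^^ k) (\<lambda>s. G (z + s *\<^sub>R h)) 0"

definition sc_inequality :: "('a::real_normed_vector \<Rightarrow> real) \<Rightarrow> 'a set \<Rightarrow> bool" where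
  "sc_inequality G D \<longleftrightarrow>
     (\<forall>z\<in>D. \<forall>h. \<bar>dir_deriv 3 G z h\<bar> \<le> 2 * (dir_deriv 2 G z h) powr (3/2))"

definition self_concordant :: "('a::real_normed_vector \<Rightarrow> real) \<Rightarrow> 'a set \<Rightarrow> bool" where
  "self_concordant G D \<longleftrightarrow> sc_inequality G D \<and>
     (\<forall>p\<in>frontier D. filterlim G at_top (at p within D))"

end

theory Submission
  imports Defs
begin


lemma deriv3_gen:
  fixes g g1 g2 :: "real \<Rightarrow> real"
  assumes ev1: "eventually (\<lambda>s. (g has_real_derivative g1 s) (at s)) (nhds 0)"
    and ev2: "eventually (\<lambda>s. (g1 has_real_derivative g2 s) (at s)) (nhds 0)"
    and d3: "(g2 has_real_derivative d) (at 0)"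
  shows "(deriv^^3) g 0 = d \<and> (deriv^^2) g 0 = g2 0"
proof -
  have e1: "eventually (\<lambda>s. eventually (\<lambda>s. (g has_real_derivative g1 s) (at s)) (nhds s)) (nhds 0)"
    using ev1 by (simp add: eventually_eventually)
  have e2: "eventually (\<lambda>s. (deriv g has_real_derivative g2 s) (at s)) (nhds 0)"
    using e1 ev2
  proof eventually_elim
    case (elim s)
    have "eventually (\<lambda>x. deriv g x = g1 x) (nhds s)"
      using elim(1) by eventually_elim (rule DERIV_imp_deriv)
    then show ?case using elim(2) DERIV_cong_ev[of s s "deriv g" g1 "g2 s" "g2 s"] by simp
  qed
  have e3: "eventually (\<lambda>s. deriv (deriv g) s = g2 s) (nhds 0)"
    using e2 by eventually_elim (rule DERIV_imp_deriv)
  have "(deriv (deriv g) has_real_derivative d) (at 0)"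
    using d3 DERIV_cong_ev[of 0 0 "deriv (deriv g)" g2 d d] e3 by simp
  hence "deriv (deriv (deriv g)) 0 = d" by (rule DERIV_imp_deriv)
  moreover have "deriv (deriv g) 0 = g2 0" using e3 eventually_nhds_x_imp_x by blast
  ultimately show ?thesis by (simp add: numeral_3_eq_3 numeral_2_eq_2)
qed

lemma lin_chain:
  fixes f :: "real \<Rightarrow> real"
  assumes "(f has_real_derivative f') (at (u + v * s))"
  shows "((\<lambda>s. k * f (u + v * s)) has_real_derivative (k * v * f')) (at s)"
proof -
  have "((\<lambda>s. u + v * s) has_real_derivative v) (at s)"
    by (auto intro!: derivative_eq_intros)
  from DERIV_chain2[OF assms this] have "((\<lambda>s. f (u + v * s)) has_real_derivative f' * v) (at s)" .
  from DERIV_cmult[OF this, of k] show ?thesis by (simp add: algebra_simps)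
qed

lemma sqrt_derivs:
  fixes x :: real
  assumes x: "x > 0"
  shows "((\<lambda>x. - sqrt x) has_real_derivative (- 1 / (2 * sqrt x))) (at x)"
    and "((\<lambda>x. - 1 / (2 * sqrt x)) has_real_derivative (1 / (4 * x * sqrt x))) (at x)"
    and "((\<lambda>x. 1 / (4 * x * sqrt x)) has_real_derivative (- 3 / (8 * x^2 * sqrt x))) (at x)"
proof -
  have sq: "sqrt x * sqrt x = x" using x by simp
  have sp: "sqrt x > 0" using x by simp
  show "((\<lambda>x. - sqrt x) has_real_derivative (- 1 / (2 * sqrt x))) (at x)"
    using x sp by (auto intro!: derivative_eq_intros simp: field_simps)
  show "((\<lambda>x. - 1 / (2 * sqrt x)) has_real_derivative (1 / (4 * x * sqrt x))) (at x)"
    using x sp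
    apply (auto intro!: derivative_eq_intros)
    apply (simp add: field_simps power2_eq_square sq)
    done
  show "((\<lambda>x. 1 / (4 * x * sqrt x)) has_real_derivative (- 3 / (8 * x^2 * sqrt x))) (at x)"
    using x sp
    apply (auto intro!: derivative_eq_intros)
    apply (simp add: field_simps power2_eq_square power3_eq_cube sq)
    done
qed

lemma ln_derivs:
  fixes x :: real
  assumes x: "x > 0"
  shows "((\<lambda>x. - ln x) has_real_derivative (- (1 / x))) (at x)"
    and "((\<lambda>x. - (1 / x)) has_real_derivative (1 / x^2)) (at x)"
    and "((\<lambda>x. 1 / x^2) has_real_derivative (- 2 / x^3)) (at x)"
  using x
  by (auto intro!: derivative_eq_intros simp: field_simps power2_eq_square power3_eq_cube eval_nat_numeral)



lemma final_comb:
  fixes a c T1 T2 :: real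
  assumes a: "a \<ge> 0" and c: "c \<ge> 0" and T1: "\<bar>T1\<bar> \<le> 3/2 * a * sqrt c" and T2: "\<bar>T2\<bar> \<le> 2 * c * sqrt c"
  shows "\<bar>T1 + T2\<bar> \<le> 2 * (a + c) powr (3/2)"
proof -
  define x where "x = sqrt (a + c)"
  define y where "y = sqrt c"
  have x0: "x \<ge> 0" and y0: "y \<ge> 0" using a c by (auto simp: x_def y_def)
  have xx: "x^2 = a + c" and yy: "y^2 = c" using a c by (auto simp: x_def y_def)
  have xy: "y \<le> x" unfolding x_def y_def using a by (simp add: real_sqrt_le_iff)
  have p: "(a + c) powr (3/2) = x^3"
  proof -
    have "(a + c) powr (3/2) = (a + c) * (a+c) powr (1/2)" using a c powr_add[of "a+c" 1 "1/2"]
      by (cases "a + c = 0") auto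
    also have "\<dots> = x^2 * x" by (simp add: xx x_def powr_half_sqrt a c)
    finally show ?thesis by (simp add: power3_eq_cube power2_eq_square)
  qed
  have "\<bar>T1 + T2\<bar> \<le> 3/2 * a * y + 2 * c * y" unfolding y_def using T1 T2 abs_triangle_ineq[of T1 T2] by linarith
  also have "\<dots> = 3/2 * (x^2 - y^2) * y + 2 * y^2 * y" using xx yy by simp
  also have "\<dots> \<le> 2 * x^3"
  proof -
    have "0 \<le> (x - y) * (x - y) * (2*x + y)" using xy x0 y0 by (intro mult_nonneg_nonneg) auto
    moreover have "y^3 \<le> x^3" using xy y0 by (rule power_mono)
    moreover have "(x - y) * (x - y) * (2*x + y) = 2*x^3 - 3*(x^2*y) + y^3"
      by (simp add: power2_eq_square power3_eq_cube algebra_simps)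
    moreover have "3/2 * (x^2 - y^2) * y + 2 * y^2 * y = 3/2*(x^2*y) + 1/2*y^3"
      by (simp add: power2_eq_square power3_eq_cube field_simps)
    ultimately show ?thesis by linarith
  qed
  finally show ?thesis using p by simp
qed

lemma cube_sum:
  fixes r :: "'d::finite \<Rightarrow> real" and k :: real
  defines "c \<equiv> (\<Sum>i\<in>UNIV. (r i)^2) + k^2"
  shows "\<bar>(\<Sum>i\<in>UNIV. (r i)^3) + k^3\<bar> \<le> c * sqrt c"
proof -
  have c0: "c \<ge> 0" unfolding c_def by (intro add_nonneg_nonneg sum_nonneg) auto
  have ri: "\<bar>r i\<bar> \<le> sqrt c" for i
  proof -
    have "(r i)^2 \<le> (\<Sum>i\<in>UNIV. (r i)^2)" by (rule member_le_sum) auto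
    hence "(r i)^2 \<le> c" unfolding c_def using zero_le_power2[of k] by linarith
    thus ?thesis by (simp add: real_le_rsqrt)
  qed
  have kk: "\<bar>k\<bar> \<le> sqrt c"
  proof -
    have "k^2 \<le> c" unfolding c_def by (simp add: sum_nonneg)
    thus ?thesis by (simp add: real_le_rsqrt)
  qed
  have "\<bar>(\<Sum>i\<in>UNIV. (r i)^3) + k^3\<bar> \<le> (\<Sum>i\<in>UNIV. \<bar>r i\<bar> * (r i)^2) + \<bar>k\<bar> * k^2"
  proof -
    have "\<bar>(\<Sum>i\<in>UNIV. (r i)^3)\<bar> \<le> (\<Sum>i\<in>UNIV. \<bar>(r i)^3\<bar>)" by (rule sum_abs)
    also have "\<dots> = (\<Sum>i\<in>UNIV. \<bar>r i\<bar> * (r i)^2)"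
      by (intro sum.cong) (auto simp: power3_eq_cube power2_eq_square abs_mult)
    moreover have "\<bar>k^3\<bar> = \<bar>k\<bar> * k^2" by (simp add: power3_eq_cube power2_eq_square abs_mult)
    ultimately show ?thesis using abs_triangle_ineq[of "\<Sum>i\<in>UNIV. (r i)^3" "k^3"] by linarith
  qed
  also have "\<dots> \<le> (\<Sum>i\<in>UNIV. sqrt c * (r i)^2) + sqrt c * k^2"
    by (intro add_mono sum_mono mult_right_mono ri kk) auto
  also have "\<dots> = sqrt c * ((\<Sum>i\<in>UNIV. (r i)^2) + k^2)" by (simp add: sum_distrib_left distrib_left)
  also have "\<dots> = c * sqrt c" unfolding c_def by simp
  finally show ?thesis .
qed

lemma term_eq:
  fixes z h beta :: real
  assumes "z > 0"
  shows "\<bar>beta * h^3 * (-3/(8*z^2* sqrt z))\<bar> = 3/2 * (\<bar>beta\<bar> * h^2 * (1/(4*z* sqrt z))) * (\<bar>h\<bar>/z)"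
  using assms by (simp add: abs_mult power_abs field_simps power2_eq_square power3_eq_cube)

lemma key_ineq:
  fixes z w lam h beta :: "'d::finite \<Rightarrow> real" and q eta t :: real
  assumes z: "\<forall>i. z i > 0" and w: "\<forall>i. w i > 0" and wz: "\<forall>i. w i \<le> z i"
    and lam: "\<forall>i. lam i > 0" and q: "q > 0" and t: "t \<ge> 0" and beta: "\<forall>i. beta i \<ge> 0"
  defines "l \<equiv> \<Sum>i\<in>UNIV. z i / lam i" and "m \<equiv> \<Sum>i\<in>UNIV. h i / lam i"
  shows "\<bar>t * ((\<Sum>i\<in>UNIV. beta i * h i^3 * (-3/(8*z i^2* sqrt (z i)))) + m^3 * (-3/(8*l^2* sqrt l)))
          + ((\<Sum>i\<in>UNIV. h i^3 * (-2 / w i^3)) + (-eta)^3 * (-2/q^3))\<bar>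
     \<le> 2 * (t * ((\<Sum>i\<in>UNIV. beta i * h i^2 * (1/(4*z i* sqrt (z i)))) + m^2 * (1/(4*l* sqrt l)))
          + ((\<Sum>i\<in>UNIV. h i^2 * (1 / w i^2)) + eta^2 * (1/q^2))) powr (3/2)"
proof -
  define r where "r i = h i / w i" for i
  define k where "k = - eta / q"
  define c where "c = (\<Sum>i\<in>UNIV. (r i)^2) + k^2"
  have c0: "c \<ge> 0" unfolding c_def by (intro add_nonneg_nonneg sum_nonneg) auto
  have ri: "\<bar>r i\<bar> \<le> sqrt c" for i
  proof -
    have "(r i)^2 \<le> (\<Sum>i\<in>UNIV. (r i)^2)" by (rule member_le_sum) auto
    hence "(r i)^2 \<le> c" unfolding c_def using zero_le_power2[of k] by linarith
    thus ?thesis by (simp add: real_le_rsqrt)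
  qed
  have hz: "\<bar>h i\<bar> / z i \<le> sqrt c" for i
  proof -
    have "\<bar>h i\<bar> / z i \<le> \<bar>h i\<bar> / w i" using z w wz by (intro divide_left_mono) (auto intro: mult_pos_pos)
    also have "\<dots> = \<bar>r i\<bar>" using w[rule_format, of i] by (simp add: r_def abs_div)
    finally show ?thesis using ri[of i] by linarith
  qed
  have lpos: "l > 0" unfolding l_def using z lam
    by (intro sum_pos) auto
  have ml: "\<bar>m\<bar> \<le> l * sqrt c"
  proof -
    have "\<bar>m\<bar> \<le> (\<Sum>i\<in>UNIV. \<bar>h i / lam i\<bar>)" unfolding m_def by (rule sum_abs)
    also have "\<dots> = (\<Sum>i\<in>UNIV. (z i / lam i) * (\<bar>h i\<bar> / z i))"
      using z lam by (intro sum.cong refl) (simp add: abs_div less_imp_neq[symmetric] abs_of_pos)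
    also have "\<dots> \<le> (\<Sum>i\<in>UNIV. (z i / lam i) * sqrt c)"
      using z lam hz by (intro sum_mono mult_left_mono) (auto intro: less_imp_le)
    also have "\<dots> = l * sqrt c" unfolding l_def by (simp add: sum_distrib_right)
    finally show ?thesis .
  qed
  define A where "A i = beta i * h i^2 * (1/(4*z i* sqrt (z i)))" for i
  define M where "M = m^2 * (1/(4*l* sqrt l))"
  have A0: "A i \<ge> 0" for i unfolding A_def using beta[rule_format, of i] z[rule_format, of i] by simp
  have M0: "M \<ge> 0" unfolding M_def using lpos by simp
  define a where "a = t * ((\<Sum>i\<in>UNIV. A i) + M)"
  have a0: "a \<ge> 0" unfolding a_def using t A0 M0 by (intro mult_nonneg_nonneg add_nonneg_nonneg sum_nonneg) auto
  define T1 where "T1 = t * ((\<Sum>i\<in>UNIV. beta i * h i^3 * (-3/(8*z i^2* sqrt (z i)))) + m^3 * (-3/(8*l^2* sqrt l)))"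
  define T2 where "T2 = (\<Sum>i\<in>UNIV. h i^3 * (-2 / w i^3)) + (-eta)^3 * (-2/q^3)"
  have T1: "\<bar>T1\<bar> \<le> 3/2 * a * sqrt c"
  proof -
    have "\<bar>(\<Sum>i\<in>UNIV. beta i * h i^3 * (-3/(8*z i^2* sqrt (z i))))\<bar>
        \<le> (\<Sum>i\<in>UNIV. \<bar>beta i * h i^3 * (-3/(8*z i^2* sqrt (z i)))\<bar>)" by (rule sum_abs)
    also have "\<dots> = (\<Sum>i\<in>UNIV. 3/2 * A i * (\<bar>h i\<bar> / z i))"
      apply (intro sum.cong refl) apply (subst term_eq[OF z[rule_format]]) using beta by (simp add: A_def)
    also have "\<dots> \<le> (\<Sum>i\<in>UNIV. 3/2 * A i * sqrt c)"
      using A0 hz by (intro sum_mono mult_left_mono) auto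
    finally have s1: "\<bar>(\<Sum>i\<in>UNIV. beta i * h i^3 * (-3/(8*z i^2* sqrt (z i))))\<bar> \<le> 3/2 * (\<Sum>i\<in>UNIV. A i) * sqrt c"
      by (simp add: sum_distrib_left sum_distrib_right mult.assoc)
    have "\<bar>m^3 * (-3/(8*l^2* sqrt l))\<bar> = 3/2 * M * (\<bar>m\<bar> / l)"
      using term_eq[of l 1 m] lpos by (simp add: M_def)
    also have "\<dots> \<le> 3/2 * M * sqrt c"
      using ml lpos M0 by (intro mult_left_mono) (auto simp: field_simps)
    finally have s2: "\<bar>m^3 * (-3/(8*l^2* sqrt l))\<bar> \<le> 3/2 * M * sqrt c" .
    have "\<bar>T1\<bar> = t * \<bar>(\<Sum>i\<in>UNIV. beta i * h i^3 * (-3/(8*z i^2* sqrt (z i)))) + m^3 * (-3/(8*l^2* sqrt l))\<bar>"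
      unfolding T1_def using t by (simp add: abs_mult)
    also have "\<dots> \<le> t * (3/2 * (\<Sum>i\<in>UNIV. A i) * sqrt c + 3/2 * M * sqrt c)"
      using s1 s2 t abs_triangle_ineq[of "\<Sum>i\<in>UNIV. beta i * h i^3 * (-3/(8*z i^2* sqrt (z i)))" "m^3 * (-3/(8*l^2* sqrt l))"]
      by (intro mult_left_mono) linarith+
    also have "\<dots> = 3/2 * a * sqrt c" unfolding a_def by (simp add: algebra_simps)
    finally show ?thesis .
  qed
  have T2: "\<bar>T2\<bar> \<le> 2 * c * sqrt c"
  proof -
    have "T2 = -2 * ((\<Sum>i\<in>UNIV. (r i)^3) + k^3)"
      unfolding T2_def r_def k_def using w q
      by (simp add: sum_distrib_left power_divide field_simps sum_negf)
    hence "\<bar>T2\<bar> = 2 * \<bar>(\<Sum>i\<in>UNIV. (r i)^3) + k^3\<bar>" by (simp only: abs_mult)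
    also have "\<dots> \<le> 2 * (c * sqrt c)" unfolding c_def by (intro mult_left_mono cube_sum) auto
    finally show ?thesis by simp
  qed
  have D2: "t * ((\<Sum>i\<in>UNIV. beta i * h i^2 * (1/(4*z i* sqrt (z i)))) + m^2 * (1/(4*l* sqrt l)))
          + ((\<Sum>i\<in>UNIV. h i^2 * (1 / w i^2)) + eta^2 * (1/q^2)) = a + c"
    unfolding a_def A_def M_def c_def r_def k_def by (simp add: power_divide)
  show ?thesis using final_comb[OF a0 c0 T1 T2] D2 unfolding T1_def T2_def by simp
qed



lemma lin_chain':
  fixes f :: "real \<Rightarrow> real"
  assumes "(f has_real_derivative f') (at (u + v * s))"
  shows "((\<lambda>s. c * v^k * f (u + v * s)) has_real_derivative (c * v^(k+1) * f')) (at s)"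
  using lin_chain[OF assms, of "c * v^k"] by (simp add: algebra_simps)

lemma combo_deriv:
  fixes beta h z w :: "'d::finite \<Rightarrow> real"
  assumes P: "\<And>x. x > 0 \<Longrightarrow> (P0 has_real_derivative P1 x) (at x)"
    and Q: "\<And>x. x > 0 \<Longrightarrow> (Q0 has_real_derivative Q1 x) (at x)"
    and pos: "\<forall>i. 0 < z i + h i * s" "\<forall>i. 0 < w i + h i * s" "0 < l + m * s" "0 < q + n * s"
  shows "((\<lambda>s. t * ((\<Sum>i\<in>UNIV. beta i * h i^k * P0 (z i + h i * s)) + m^k * P0 (l + m * s))
               + ((\<Sum>i\<in>UNIV. 1 * h i^k * Q0 (w i + h i * s)) + 1 * n^k * Q0 (q + n * s)))
      has_real_derivative
         (t * ((\<Sum>i\<in>UNIV. beta i * h i^(k+1) * P1 (z i + h i * s)) + m^(k+1) * P1 (l + m * s))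
               + ((\<Sum>i\<in>UNIV. 1 * h i^(k+1) * Q1 (w i + h i * s)) + 1 * n^(k+1) * Q1 (q + n * s)))) (at s)"
proof -
  have m: "((\<lambda>s. m^k * P0 (l + m * s)) has_real_derivative m^(k+1) * P1 (l + m * s)) (at s)"
    using lin_chain'[OF P[OF pos(3)], of 1 k] by simp
  show ?thesis
    by (intro DERIV_add DERIV_cmult DERIV_sum lin_chain' P Q m pos[rule_format])
qed



lemma ev_pos:
  fixes a c :: real
  assumes "a > 0"
  shows "eventually (\<lambda>s. 0 < a + c * s) (nhds 0)"
proof -
  have "((\<lambda>s. a + c * s) \<longlongrightarrow> a + c * 0) (nhds 0)" by (intro tendsto_intros filterlim_ident)
  thus ?thesis using assms by (intro order_tendstoD(1)) auto
qed

lemma sc_point: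
  fixes b lam z h :: "real ^ ('d::{finite,linorder})" and B :: "'d \<Rightarrow> real" and t :: real
  assumes lam_pos: "\<forall>i. lam $ i > 0" and t: "t \<ge> 0" and B0: "\<forall>i. B i \<ge> 0"
    and zB: "\<forall>i. z $ i > B i" and zs: "(\<Sum>i\<in>UNIV. z $ i) < 1"
    and G_def: "G = (\<lambda>y. t * (- (\<Sum>i\<in>UNIV. \<bar>b $ i\<bar> * sqrt (y $ i)) - sqrt (\<Sum>i\<in>UNIV. y $ i / lam $ i))
                  - (\<Sum>i\<in>UNIV. ln (y $ i - B i)) - ln (1 - (\<Sum>i\<in>UNIV. y $ i)))"
  shows "\<bar>dir_deriv 3 G z h\<bar> \<le> 2 * (dir_deriv 2 G z h) powr (3/2)"
proof -
  define zz where "zz i = z $ i" for i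
  define hh where "hh i = h $ i" for i
  define ll where "ll i = lam $ i" for i
  define beta where "beta i = \<bar>b $ i\<bar>" for i
  define w where "w i = z $ i - B i" for i
  define l where "l = (\<Sum>i\<in>UNIV. zz i / ll i)"
  define m where "m = (\<Sum>i\<in>UNIV. hh i / ll i)"
  define q where "q = 1 - (\<Sum>i\<in>UNIV. zz i)"
  define n where "n = - (\<Sum>i\<in>UNIV. hh i)"
  define S0 where "S0 = (\<lambda>x::real. - sqrt x)"
  define S1 where "S1 = (\<lambda>x::real. - 1 / (2 * sqrt x))"
  define S2 where "S2 = (\<lambda>x::real. 1 / (4 * x * sqrt x))"
  define S3 where "S3 = (\<lambda>x::real. - 3 / (8 * x^2 * sqrt x))"
  define L0 where "L0 = (\<lambda>x::real. - ln x)"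
  define L1 where "L1 = (\<lambda>x::real. - (1 / x))"
  define L2 where "L2 = (\<lambda>x::real. 1 / x^2)"
  define L3 where "L3 = (\<lambda>x::real. - 2 / x^3)"
  define GG where "GG k P Q s = t * ((\<Sum>i\<in>UNIV. beta i * hh i^k * P (zz i + hh i * s)) + m^k * P (l + m * s))
               + ((\<Sum>i\<in>UNIV. 1 * hh i^k * Q (w i + hh i * s)) + 1 * n^k * Q (q + n * s))" for k P Q s
  have zpos: "\<forall>i. zz i > 0" using zB B0 unfolding zz_def by (meson le_less_trans)
  have wpos: "\<forall>i. w i > 0" using zB unfolding w_def by simp
  have wz: "\<forall>i. w i \<le> zz i" using B0 unfolding w_def zz_def by simp
  have llpos: "\<forall>i. ll i > 0" using lam_pos unfolding ll_def by simp
  have qpos: "q > 0" using zs unfolding q_def zz_def by simp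
  have lpos: "l > 0" unfolding l_def using zpos llpos by (intro sum_pos) auto
  have gG: "(\<lambda>s. G (z + s *\<^sub>R h)) = GG 0 S0 L0"
  proof
    fix s
    have e1: "(\<Sum>i\<in>UNIV. (z + s *\<^sub>R h) $ i / lam $ i) = l + m * s"
      unfolding l_def m_def zz_def hh_def ll_def
      by (simp add: add_divide_distrib sum.distrib sum_distrib_right; rule sum.cong; simp)
    have e2: "1 - (\<Sum>i\<in>UNIV. (z + s *\<^sub>R h) $ i) = q + n * s"
      unfolding q_def n_def zz_def hh_def by (simp add: sum.distrib sum_distrib_left mult.commute)
    have e3: "(z + s *\<^sub>R h) $ i - B i = w i + hh i * s" for i
      unfolding w_def hh_def by (simp add: algebra_simps)
    have e4: "(z + s *\<^sub>R h) $ i = zz i + hh i * s" for i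
      unfolding zz_def hh_def by (simp add: algebra_simps)
    show "G (z + s *\<^sub>R h) = GG 0 S0 L0 s"
      unfolding G_def GG_def S0_def L0_def e1 e2 e3
      by (simp add: e4 beta_def sum_negf algebra_simps zz_def hh_def)
  qed
  have ev: "eventually (\<lambda>s. (\<forall>i. 0 < zz i + hh i * s) \<and> (\<forall>i. 0 < w i + hh i * s) \<and> 0 < l + m * s \<and> 0 < q + n * s) (nhds 0)"
    using zpos wpos lpos qpos
    by (intro eventually_conj eventually_all_finite ev_pos) auto
  have d01: "\<And>x. x > 0 \<Longrightarrow> (S0 has_real_derivative S1 x) (at x)"
    "\<And>x. x > 0 \<Longrightarrow> (S1 has_real_derivative S2 x) (at x)"
    "\<And>x. x > 0 \<Longrightarrow> (S2 has_real_derivative S3 x) (at x)"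
    "\<And>x. x > 0 \<Longrightarrow> (L0 has_real_derivative L1 x) (at x)"
    "\<And>x. x > 0 \<Longrightarrow> (L1 has_real_derivative L2 x) (at x)"
    "\<And>x. x > 0 \<Longrightarrow> (L2 has_real_derivative L3 x) (at x)"
    unfolding S0_def S1_def S2_def S3_def L0_def L1_def L2_def L3_def
    using sqrt_derivs ln_derivs by auto
  have ev1: "eventually (\<lambda>s. (GG 0 S0 L0 has_real_derivative GG 1 S1 L1 s) (at s)) (nhds 0)"
    using ev
  proof eventually_elim
    case (elim s)
    thus ?case unfolding GG_def using combo_deriv[OF d01(1) d01(4), of zz hh s w l m q n t beta 0] by auto
  qed
  have ev2: "eventually (\<lambda>s. (GG 1 S1 L1 has_real_derivative GG 2 S2 L2 s) (at s)) (nhds 0)"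
    using ev
  proof eventually_elim
    case (elim s)
    thus ?case unfolding GG_def using combo_deriv[OF d01(2) d01(5), of zz hh s w l m q n t beta 1] by (auto simp: power2_eq_square)
  qed
  have d3: "(GG 2 S2 L2 has_real_derivative GG 3 S3 L3 0) (at 0)"
    unfolding GG_def using combo_deriv[OF d01(3) d01(6), of zz hh 0 w l m q n t beta 2] zpos wpos lpos qpos
    by auto
  from deriv3_gen[OF ev1 ev2 d3]
  have D: "dir_deriv 3 G z h = GG 3 S3 L3 0" "dir_deriv 2 G z h = GG 2 S2 L2 0"
    unfolding dir_deriv_def gG by auto
  have K: "\<bar>GG 3 S3 L3 0\<bar> \<le> 2 * (GG 2 S2 L2 0) powr (3/2)"
    using key_ineq[OF zpos wpos wz llpos qpos t, of beta hh "- n"]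
    unfolding GG_def S2_def S3_def L2_def L3_def l_def[symmetric] m_def[symmetric] beta_def
    by simp
  show ?thesis using K D by simp
qed



lemma frontier_part:
  fixes b lam p :: "real ^ ('d::{finite,linorder})" and B :: "'d \<Rightarrow> real" and t :: real
  assumes lam_pos: "\<forall>i. lam $ i > 0" and t: "t \<ge> 0" and B0: "\<forall>i. B i \<ge> 0"
    and D_def: "D = {y. (\<forall>i. y $ i > B i) \<and> (\<Sum>i\<in>UNIV. y $ i) < 1}"
    and G_def: "G = (\<lambda>y. t * (- (\<Sum>i\<in>UNIV. \<bar>b $ i\<bar> * sqrt (y $ i)) - sqrt (\<Sum>i\<in>UNIV. y $ i / lam $ i))
                  - (\<Sum>i\<in>UNIV. ln (y $ i - B i)) - ln (1 - (\<Sum>i\<in>UNIV. y $ i)))"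
    and p: "p \<in> frontier D"
  shows "filterlim G at_top (at p within D)"
proof -
  have Deq: "D = (\<Inter>i\<in>UNIV. {y. B i < y $ i}) \<inter> {y. (\<Sum>i\<in>UNIV. y $ i) < 1}"
    unfolding D_def by auto
  have oD: "open D" unfolding Deq
    by (intro open_Int open_INT ballI open_Collect_less continuous_intros) auto
  have Ceq: "closure D \<subseteq> (\<Inter>i\<in>UNIV. {y. B i \<le> y $ i}) \<inter> {y. (\<Sum>i\<in>UNIV. y $ i) \<le> 1}"
    by (intro closure_minimal closed_Int closed_INT ballI closed_Collect_le continuous_intros)
       (auto simp: D_def less_imp_le)
  have pc: "p \<in> closure D" and pD: "p \<notin> D" using p oD by (auto simp: frontier_def interior_open)
  from pc Ceq have pC: "\<forall>i. B i \<le> p $ i" "(\<Sum>i\<in>UNIV. p $ i) \<le> 1" by auto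
  obtain wf :: "real ^ ('d::{finite,linorder}) \<Rightarrow> real" where
    wcont: "(wf \<longlongrightarrow> 0) (at p within D)" and
    wle: "\<forall>y\<in>D. 0 < wf y \<and> - ln (wf y) \<le> (\<Sum>i\<in>UNIV. - ln (y $ i - B i)) + - ln (1 - (\<Sum>i\<in>UNIV. y $ i))"
  proof -
    have nn: "0 \<le> - ln (y $ i - B i)" "0 \<le> - ln (1 - (\<Sum>i\<in>UNIV. y $ i))"
      "0 < y $ i - B i" "0 < 1 - (\<Sum>i\<in>UNIV. y $ i)" if y: "y \<in> D" for y i
    proof -
      have ypos: "\<forall>i. 0 < y $ i" using y B0 unfolding D_def by (auto intro: le_less_trans)
      have "y $ i \<le> (\<Sum>i\<in>UNIV. y $ i)" using ypos by (intro member_le_sum) (auto intro: less_imp_le)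
      moreover have "(\<Sum>i\<in>UNIV. y $ i) \<ge> 0" using ypos by (intro sum_nonneg) (auto intro: less_imp_le)
      moreover have "y $ i > B i" "(\<Sum>i\<in>UNIV. y $ i) < 1" using y unfolding D_def by auto
      ultimately show "0 \<le> - ln (y $ i - B i)" "0 \<le> - ln (1 - (\<Sum>i\<in>UNIV. y $ i))"
        "0 < y $ i - B i" "0 < 1 - (\<Sum>i\<in>UNIV. y $ i)" using B0[rule_format, of i] by auto
    qed
    show ?thesis
    proof (cases "\<exists>j. p $ j = B j")
      case True
      then obtain j where j: "p $ j = B j" by blast
      show ?thesis
      proof (rule that[of "\<lambda>y. y $ j - B j"])
        have "((\<lambda>y. y $ j - B j) \<longlongrightarrow> p $ j - B j) (at p within D)"
          by (intro tendsto_intros tendsto_vec_nth tendsto_ident_at)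
        thus "((\<lambda>y. y $ j - B j) \<longlongrightarrow> 0) (at p within D)" using j by simp
        show "\<forall>y\<in>D. 0 < y $ j - B j \<and> - ln (y $ j - B j) \<le> (\<Sum>i\<in>UNIV. - ln (y $ i - B i)) + - ln (1 - (\<Sum>i\<in>UNIV. y $ i))"
        proof
          fix y assume y: "y \<in> D"
          have "- ln (y $ j - B j) \<le> (\<Sum>i\<in>UNIV. - ln (y $ i - B i))"
            using nn(1)[OF y] by (intro member_le_sum[where f="\<lambda>i. - ln (y $ i - B i)"]) auto
          thus "0 < y $ j - B j \<and> - ln (y $ j - B j) \<le> (\<Sum>i\<in>UNIV. - ln (y $ i - B i)) + - ln (1 - (\<Sum>i\<in>UNIV. y $ i))"
            using nn(2)[OF y] nn(3)[OF y, of j] by linarith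
        qed
      qed
    next
      case False
      hence s1: "(\<Sum>i\<in>UNIV. p $ i) = 1" 
      proof -
        have "\<forall>i. B i < p $ i" using False pC(1) by (metis order_le_less)
        thus ?thesis using pD pC(2) unfolding D_def by auto
      qed
      show ?thesis
      proof (rule that[of "\<lambda>y. 1 - (\<Sum>i\<in>UNIV. y $ i)"])
        have "((\<lambda>y. 1 - (\<Sum>i\<in>UNIV. y $ i)) \<longlongrightarrow> 1 - (\<Sum>i\<in>UNIV. p $ i)) (at p within D)"
          by (intro tendsto_intros tendsto_vec_nth tendsto_ident_at)
        thus "((\<lambda>y. 1 - (\<Sum>i\<in>UNIV. y $ i)) \<longlongrightarrow> 0) (at p within D)" using s1 by simp
        show "\<forall>y\<in>D. 0 < 1 - (\<Sum>i\<in>UNIV. y $ i) \<and> - ln (1 - (\<Sum>i\<in>UNIV. y $ i)) \<le> (\<Sum>i\<in>UNIV. - ln (y $ i - B i)) + - ln (1 - (\<Sum>i\<in>UNIV. y $ i))"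
        proof
          fix y assume y: "y \<in> D"
          have "0 \<le> (\<Sum>i\<in>UNIV. - ln (y $ i - B i))" using nn(1)[OF y] by (intro sum_nonneg) auto
          thus "0 < 1 - (\<Sum>i\<in>UNIV. y $ i) \<and> - ln (1 - (\<Sum>i\<in>UNIV. y $ i)) \<le> (\<Sum>i\<in>UNIV. - ln (y $ i - B i)) + - ln (1 - (\<Sum>i\<in>UNIV. y $ i))"
            using nn(4)[OF y] by linarith
        qed
      qed
    qed
  qed
  define K where "K = (\<Sum>i\<in>UNIV. \<bar>b $ i\<bar>) + sqrt (\<Sum>i\<in>UNIV. 1 / lam $ i)"
  have Fb: "t * (- (\<Sum>i\<in>UNIV. \<bar>b $ i\<bar> * sqrt (y $ i)) - sqrt (\<Sum>i\<in>UNIV. y $ i / lam $ i)) \<ge> - t * K"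
    if y: "y \<in> D" for y
  proof -
    have ypos: "\<forall>i. 0 < y $ i" using y B0 unfolding D_def by (auto intro: le_less_trans)
    have yle: "y $ i \<le> 1" for i
    proof -
      have "y $ i \<le> (\<Sum>i\<in>UNIV. y $ i)" using ypos by (intro member_le_sum) (auto intro: less_imp_le)
      thus ?thesis using y unfolding D_def by auto
    qed
    have a: "(\<Sum>i\<in>UNIV. \<bar>b $ i\<bar> * sqrt (y $ i)) \<le> (\<Sum>i\<in>UNIV. \<bar>b $ i\<bar>)"
      using yle ypos by (intro sum_mono mult_right_le_one_le) (auto intro: less_imp_le)
    have "(\<Sum>i\<in>UNIV. y $ i / lam $ i) \<le> (\<Sum>i\<in>UNIV. 1 / lam $ i)"
      using yle lam_pos by (intro sum_mono divide_right_mono) (auto intro: less_imp_le)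
    hence c: "sqrt (\<Sum>i\<in>UNIV. y $ i / lam $ i) \<le> sqrt (\<Sum>i\<in>UNIV. 1 / lam $ i)" by simp
    have "(\<Sum>i\<in>UNIV. \<bar>b $ i\<bar> * sqrt (y $ i)) + sqrt (\<Sum>i\<in>UNIV. y $ i / lam $ i) \<le> K"
      using a c unfolding K_def by linarith
    from mult_left_mono[OF this t] show ?thesis by (simp add: algebra_simps)
  qed
  have lim1: "filterlim (\<lambda>y. - ln (wf y)) at_top (at p within D)"
  proof -
    have "filterlim wf (at_right 0) (at p within D)"
      using wle by (intro tendsto_imp_filterlim_at_right[OF wcont])
        (auto simp: eventually_at_filter)
    from filterlim_compose[OF ln_at_0 this]
    show ?thesis by (simp add: filterlim_uminus_at_bot)
  qed
  have lim2: "filterlim (\<lambda>y. - t * K + - ln (wf y)) at_top (at p within D)"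
    by (rule filterlim_tendsto_add_at_top[OF tendsto_const lim1])
  show ?thesis
  proof (rule filterlim_at_top_mono[OF lim2])
    show "eventually (\<lambda>y. - t * K + - ln (wf y) \<le> G y) (at p within D)"
      unfolding eventually_at_filter
    proof (intro always_eventually allI impI)
      fix y assume y: "y \<in> D"
      have "G y = t * (- (\<Sum>i\<in>UNIV. \<bar>b $ i\<bar> * sqrt (y $ i)) - sqrt (\<Sum>i\<in>UNIV. y $ i / lam $ i))
                 + ((\<Sum>i\<in>UNIV. - ln (y $ i - B i)) + - ln (1 - (\<Sum>i\<in>UNIV. y $ i)))"
        unfolding G_def by (simp add: sum_negf)
      thus "- t * K + - ln (wf y) \<le> G y" using Fb[OF y] wle y by fastforce
    qed
  qed
qed



theorem lemma2:
  fixes b lam :: "real ^ ('d::{finite,linorder})"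
    and F :: "real ^ ('d::{finite,linorder}) \<Rightarrow> real" and B :: "('d::{finite,linorder}) \<Rightarrow> real" and I :: "('d::{finite,linorder}) set"
    and D\<^sub>F :: "(real ^ ('d::{finite,linorder})) set" and t\<^sub>0 :: real
    and Ft :: "real \<Rightarrow> real ^ ('d::{finite,linorder}) \<Rightarrow> real"
  assumes b_nz: "b \<noteq> 0"
    and lam_pos: "\<forall>i. lam $ i > 0"
    and lam_dec: "\<forall>i j. i \<le> j \<longrightarrow> lam $ j \<le> lam $ i"
    and F_def: "F = (\<lambda>y. - (\<Sum>i\<in>UNIV. \<bar>b $ i\<bar> * sqrt (y $ i))
                          - sqrt (\<Sum>i\<in>UNIV. y $ i / lam $ i))"
    and B_def: "B = (\<lambda>i. (b $ i)\<^sup>2 * (norm b + (lam $ (Max UNIV)) powr (-1/2)) powr (-2))"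
    and I_def: "I = {i. b $ i \<noteq> 0}"
    and D_def: "D\<^sub>F = {y. (\<forall>i. y $ i > B i) \<and> (\<Sum>i\<in>UNIV. y $ i) < 1}"
    and t0_def: "t\<^sub>0 = 9 * max (Max ((\<lambda>i. ((b $ i)\<^sup>2 * B i) powr (-1/2)) ` I))
                               (Min ((\<lambda>i. (B i / lam $ i) powr (-1/2)) ` I))"
    and Ft_def: "Ft = (\<lambda>t y. t * F y - (\<Sum>i\<in>UNIV. ln (y $ i - B i))
                              - ln (1 - (\<Sum>i\<in>UNIV. y $ i)))"
  shows "\<forall>t\<ge>t\<^sub>0. self_concordant (Ft t) D\<^sub>F"
proof (intro allI impI)
  fix t assume tt: "t \<ge> t\<^sub>0"
  obtain j where j: "b $ j \<noteq> 0" using b_nz by (metis vec_eq_iff zero_index)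
  have jI: "j \<in> I" using j I_def by simp
  have fI: "finite I" by simp
  have "0 \<le> ((b $ j)\<^sup>2 * B j) powr (-1/2)" by simp
  also have "\<dots> \<le> Max ((\<lambda>i. ((b $ i)\<^sup>2 * B i) powr (-1/2)) ` I)"
    using jI fI by (intro Max_ge) auto
  finally have "t\<^sub>0 \<ge> 0" unfolding t0_def by linarith
  hence t: "t \<ge> 0" using tt by linarith
  have B0: "\<forall>i. B i \<ge> 0" unfolding B_def by simp
  have G: "Ft t = (\<lambda>y. t * (- (\<Sum>i\<in>UNIV. \<bar>b $ i\<bar> * sqrt (y $ i)) - sqrt (\<Sum>i\<in>UNIV. y $ i / lam $ i))
                  - (\<Sum>i\<in>UNIV. ln (y $ i - B i)) - ln (1 - (\<Sum>i\<in>UNIV. y $ i)))"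
    unfolding Ft_def F_def by simp
  show "self_concordant (Ft t) D\<^sub>F"
    unfolding self_concordant_def sc_inequality_def
  proof (intro conjI ballI allI)
    fix z h assume z: "z \<in> D\<^sub>F"
    show "\<bar>dir_deriv 3 (Ft t) z h\<bar> \<le> 2 * dir_deriv 2 (Ft t) z h powr (3 / 2)"
      using z by (intro sc_point[OF lam_pos t B0 _ _ G]) (auto simp: D_def)
  next
    fix p assume "p \<in> frontier D\<^sub>F"
    thus "filterlim (Ft t) at_top (at p within D\<^sub>F)"
      by (rule frontier_part[OF lam_pos t B0 D_def G])
  qed
qed


end
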